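(* Fix $\mathbf{x} \in \Omega$, $\alpha \in [0,1)$, and a total preorder $R$ on $\Omega$ with $\mathcal{F}(\Omega(\mathbf{x},R),\alpha)$ nonempty. Suppose there exists a set $C \subseteq S$ such that for any $G, H \in \mathcal{F}$ agreeing both cumulatively and pointwise on $C$, $P_G[\Omega(\mathbf{x},R)] = P_H[\Omega(\mathbf{x},R)]$. Then $$B_R^*(\mathbf{x}) = \min\{E[F] : F \in \mathcal{F}_{C^+}(\Omega(\mathbf{x},R),\alpha)\}.$$
   Context: Fix integers $m \ge 2$, $n \ge 1$ and reals $S_{\min} < S_{\max}$; $S = \{S_0,\dots,S_{m-1}\}$ with $S_k = S_{\min} + k\frac{S_{\max}-S_{\min}}{m-1}$. $\mathcal{F}$ is the set of probability distributions on $S$, identified with the probability simplex in $\mathbb{R}^m$ with the Euclidean topology; $E[F]$ is the mean. $\Omega$ is the set of samples of size $n$ from $S$, identified with their sorted versions. $P_F[\Omega']$ is the probability that the sorted sample of $n$ i.i.d. draws from $F$ lies in $\Omega' \subseteq \Omega$; $\mathcal{G}(\Omega',\alpha) = \{F : P_F[\Omega'] > \alpha\}$ and $\mathcal{F}(\Omega',\alpha)$ is its closure. A total preorder $R$ on $\Omega$ is a reflexive, transitive, total relation $\lesssim_R$; $\Omega(\mathbf{x},R) = \{\mathbf{y} : \mathbf{x} \lesssim_R \mathbf{y}\}$; $B_R^*(\mathbf{x}) = \min\{E[F] : F \in \mathcal{F}(\Omega(\mathbf{x},R),\alpha)\}$. For $C \subseteq S$: $G,H \in \mathcal{F}$ agree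 pointwise on $C$ if $P_G[X = s] = P_H[X = s]$ for all $s \in C$, and cumulatively on $C$ if $P_G[X \le s] = P_H[X \le s]$ for all $s \in C$ ($X$ a single draw). The refinement $\mathcal{F}_C = \{F \in \mathcal{F} : P_F[X = s] = 0 \ \forall s \in S\setminus C\}$, $\mathcal{G}_C(\Omega',\alpha) = \mathcal{F}_C \cap \mathcal{G}(\Omega',\alpha)$, and $\mathcal{F}_C(\Omega',\alpha)$ is the closure of $\mathcal{G}_C(\Omega',\alpha)$. The augmentation is $C^+ = C \cup \{S_{\min}\} \cup \{S_{j+1} : S_j \in C,\ j \le m-2\}$. *)

theory Defs
  imports "HOL-Analysis.Analysis" "HOL-Library.Multiset"
begin

text \<open>Support points are indexed by k < m; the actual value of index k is Sval.\<close>
definition Sval :: "real \<Rightarrow> real \<Rightarrow> nat \<Rightarrow> nat \<Rightarrow> real" where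
  "Sval Smin Smax m k = Smin + real k * (Smax - Smin) / (real m - 1)"

definition distrs :: "nat \<Rightarrow> (nat \<Rightarrow> real) set" where
  "distrs m = {F. (\<forall>k. k < m \<longrightarrow> 0 \<le> F k) \<and> (\<forall>k. m \<le> k \<longrightarrow> F k = 0)
                  \<and> (\<Sum>k<m. F k) = 1}"

definition mean :: "real \<Rightarrow> real \<Rightarrow> nat \<Rightarrow> (nat \<Rightarrow> real) \<Rightarrow> real" where
  "mean Smin Smax m F = (\<Sum>k<m. F k * Sval Smin Smax m k)"

text \<open>Sorted samples of size n, represented as multisets of indices.\<close>
definition samples :: "nat \<Rightarrow> nat \<Rightarrow> nat multiset set" where
  "samples m n = {M. size M = n \<and> set_mset M \<subseteq> {..<m}}"

text \<open>Probability that the sorted sample of n iid draws from F lies in Om'.\<close>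
definition prob_samp :: "nat \<Rightarrow> nat \<Rightarrow> (nat \<Rightarrow> real) \<Rightarrow> nat multiset set \<Rightarrow> real" where
  "prob_samp m n F Om' = (\<Sum>f \<in> {..<n} \<rightarrow>\<^sub>E {..<m}.
      if image_mset f (mset_set {..<n}) \<in> Om' then (\<Prod>i<n. F (f i)) else 0)"

definition Gset :: "nat \<Rightarrow> nat \<Rightarrow> nat multiset set \<Rightarrow> real \<Rightarrow> (nat \<Rightarrow> real) set" where
  "Gset m n Om' \<alpha> = {F \<in> distrs m. prob_samp m n F Om' > \<alpha>}"

definition Fset :: "nat \<Rightarrow> nat \<Rightarrow> nat multiset set \<Rightarrow> real \<Rightarrow> (nat \<Rightarrow> real) set" where
  "Fset m n Om' \<alpha> = closure (Gset m n Om' \<alpha>)"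

definition total_preorder_on_samples ::
  "nat multiset set \<Rightarrow> (nat multiset \<times> nat multiset) set \<Rightarrow> bool" where
  "total_preorder_on_samples Om R \<longleftrightarrow> R \<subseteq> Om \<times> Om \<and> refl_on Om R \<and> trans R \<and> total_on Om R"

definition upset :: "nat multiset set \<Rightarrow> (nat multiset \<times> nat multiset) set \<Rightarrow> nat multiset \<Rightarrow> nat multiset set" where
  "upset Om R x = {y \<in> Om. (x, y) \<in> R}"

definition is_min :: "real set \<Rightarrow> real \<Rightarrow> bool" where
  "is_min A v \<longleftrightarrow> v \<in> A \<and> (\<forall>a\<in>A. v \<le> a)"

definition Bstar :: "real \<Rightarrow> real \<Rightarrow> nat \<Rightarrow> nat \<Rightarrow> real \<Rightarrow> (nat multiset \<times> nat multiset) set \<Rightarrow> nat multiset \<Rightarrow> real" where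
  "Bstar Smin Smax m n \<alpha> R x = Inf (mean Smin Smax m ` Fset m n (upset (samples m n) R x) \<alpha>)"

definition agree_pointwise :: "nat set \<Rightarrow> (nat \<Rightarrow> real) \<Rightarrow> (nat \<Rightarrow> real) \<Rightarrow> bool" where
  "agree_pointwise C G H \<longleftrightarrow> (\<forall>k\<in>C. G k = H k)"

definition agree_cumulative :: "nat set \<Rightarrow> (nat \<Rightarrow> real) \<Rightarrow> (nat \<Rightarrow> real) \<Rightarrow> bool" where
  "agree_cumulative C G H \<longleftrightarrow> (\<forall>k\<in>C. (\<Sum>i\<le>k. G i) = (\<Sum>i\<le>k. H i))"

definition distrs_on :: "nat \<Rightarrow> nat set \<Rightarrow> (nat \<Rightarrow> real) set" where
  "distrs_on m C = {F \<in> distrs m. \<forall>k<m. k \<notin> C \<longrightarrow> F k = 0}"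

definition Gset_on :: "nat \<Rightarrow> nat \<Rightarrow> nat set \<Rightarrow> nat multiset set \<Rightarrow> real \<Rightarrow> (nat \<Rightarrow> real) set" where
  "Gset_on m n C Om' \<alpha> = distrs_on m C \<inter> Gset m n Om' \<alpha>"

definition Fset_on :: "nat \<Rightarrow> nat \<Rightarrow> nat set \<Rightarrow> nat multiset set \<Rightarrow> real \<Rightarrow> (nat \<Rightarrow> real) set" where
  "Fset_on m n C Om' \<alpha> = closure (Gset_on m n C Om' \<alpha>)"

definition augment :: "nat \<Rightarrow> nat set \<Rightarrow> nat set" where
  "augment m C = C \<union> {0} \<union> {Suc j | j. j \<in> C \<and> j \<le> m - 2}"

end

theory Submission
  imports Defs
begin

definition tmap :: "nat set \<Rightarrow> nat \<Rightarrow> nat" where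
  "tmap C k = (if k \<in> C then k else if \<exists>c\<in>C. c < k then Suc (Max {c\<in>C. c < k}) else 0)"

lemma tmap_le: "finite C \<Longrightarrow> tmap C k \<le> k"
proof -
  assume f: "finite C"
  show ?thesis
  proof (cases "k \<in> C")
    case False
    show ?thesis
    proof (cases "\<exists>c\<in>C. c < k")
      case True
      have "Max {c\<in>C. c < k} \<in> {c\<in>C. c < k}" using f True by (intro Max_in) auto
      then show ?thesis using False True by (simp add: tmap_def)
    qed (simp add: tmap_def False)
  qed (simp add: tmap_def)
qed

lemma tmap_notin: "finite C \<Longrightarrow> k \<notin> C \<Longrightarrow> tmap C k \<notin> C"
proof -
  assume f: "finite C" and k: "k \<notin> C"
  show ?thesis
  proof (cases "\<exists>c\<in>C. c < k")
    case True
    have fin: "finite {c\<in>C. c < k}" using f by auto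
    have M: "Max {c\<in>C. c < k} \<in> {c\<in>C. c < k}" using f True by (intro Max_in) auto
    have "Suc (Max {c\<in>C. c < k}) \<notin> C"
    proof
      assume h: "Suc (Max {c\<in>C. c < k}) \<in> C"
      show False
      proof (cases "Suc (Max {c\<in>C. c < k}) < k")
        case True
        then have "Suc (Max {c\<in>C. c < k}) \<le> Max {c\<in>C. c < k}" using h fin by (intro Max_ge) auto
        then show False by simp
      next
        case False
        then have "Suc (Max {c\<in>C. c < k}) = k" using M by auto
        then show False using h k by simp
      qed
    qed
    then show ?thesis using k True by (simp add: tmap_def)
  next
    case False
    then have "0 \<notin> C" using k by (metis gr0I)
    then show ?thesis using k False by (simp add: tmap_def)
  qed
qed

lemma tmap_aug: "C \<subseteq> {..<m} \<Longrightarrow> k < m \<Longrightarrow> tmap C k \<in> augment m C"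
proof -
  assume C: "C \<subseteq> {..<m}" and k: "k < m"
  have f: "finite C" using C finite_subset by blast
  show ?thesis
  proof (cases "k \<in> C")
    case False
    show ?thesis
    proof (cases "\<exists>c\<in>C. c < k")
      case True
      have M: "Max {c\<in>C. c < k} \<in> {c\<in>C. c < k}" using f True by (intro Max_in) auto
      then have "Max {c\<in>C. c < k} \<le> m - 2" using k by auto
      then show ?thesis using False True M unfolding tmap_def augment_def by auto
    qed (auto simp add: tmap_def augment_def False)
  qed (auto simp add: tmap_def augment_def)
qed

lemma tmap_cum: "finite C \<Longrightarrow> c \<in> C \<Longrightarrow> (tmap C k \<le> c) = (k \<le> c)"
proof -
  assume f: "finite C" and c: "c \<in> C"
  show ?thesis
  proof
    assume "tmap C k \<le> c"
    show "k \<le> c"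
    proof (rule ccontr)
      assume kc: "\<not> k \<le> c"
      show False
      proof (cases "k \<in> C")
        case True then show False using kc \<open>tmap C k \<le> c\<close> by (simp add: tmap_def)
      next
        case False
        have ex: "\<exists>c\<in>C. c < k" using c kc not_le by blast
        have "c \<le> Max {c\<in>C. c < k}" using f c kc by (intro Max_ge) auto
        then show False using False ex \<open>tmap C k \<le> c\<close> by (simp add: tmap_def)
      qed
    qed
  next
    assume "k \<le> c" then show "tmap C k \<le> c" using tmap_le[OF f, of k] by simp
  qed
qed

definition transf :: "nat \<Rightarrow> nat set \<Rightarrow> (nat \<Rightarrow> real) \<Rightarrow> nat \<Rightarrow> real" where
  "transf m C F i = sum F {k. k < m \<and> tmap C k = i}"

lemma transf_sum:
  assumes "finite A"
  shows "sum (transf m C F) A = sum F {k. k < m \<and> tmap C k \<in> A}"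
proof -
  have "sum F {k. k < m \<and> tmap C k \<in> A} =
        (\<Sum>y\<in>A. sum F {x. x \<in> {k. k < m \<and> tmap C k \<in> A} \<and> tmap C x = y})"
    by (rule sum.group[symmetric]) (auto simp: assms)
  also have "\<dots> = sum (transf m C F) A"
    unfolding transf_def by (intro sum.cong refl arg_cong2[where f=sum]) auto
  finally show ?thesis by simp
qed

lemma Sval_mono:
  assumes "m \<ge> 2" "Smin < Smax" "j \<le> k"
  shows "Sval Smin Smax m j \<le> Sval Smin Smax m k"
proof -
  have "real m - 1 > 0" using assms by simp
  moreover have "real j * (Smax - Smin) \<le> real k * (Smax - Smin)"
    using assms by (intro mult_right_mono) auto
  ultimately show ?thesis unfolding Sval_def by (simp add: divide_right_mono)
qed

lemma transform:
  assumes m: "m \<ge> 2" and S: "Smin < Smax" and C: "C \<subseteq> {..<m}" and F: "F \<in> distrs m"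
  shows "transf m C F \<in> distrs_on m (augment m C)"
    and "agree_cumulative C F (transf m C F)"
    and "agree_pointwise C F (transf m C F)"
    and "mean Smin Smax m (transf m C F) \<le> mean Smin Smax m F"
proof -
  have f: "finite C" using C finite_subset by blast
  let ?F = "transf m C F"
  have nn: "\<And>k. 0 \<le> F k"
  proof -
    fix k show "0 \<le> F k" using F unfolding distrs_def by (cases "k < m") auto
  qed
  have tl: "\<And>k. tmap C k \<le> k" using tmap_le[OF f] .
  have "?F \<in> distrs m"
  proof -
    have "\<And>k. 0 \<le> ?F k" unfolding transf_def using nn by (simp add: sum_nonneg)
    moreover have "\<And>k. m \<le> k \<Longrightarrow> ?F k = 0"
    proof -
      fix k assume "m \<le> k"
      have "\<And>j. tmap C j = k \<Longrightarrow> \<not> j < m"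
      proof -
        fix j assume "tmap C j = k"
        then have "k \<le> j" using tl[of j] by simp
        then show "\<not> j < m" using \<open>m \<le> k\<close> by simp
      qed
      then have "{j. j < m \<and> tmap C j = k} = {}" by blast
      then show "?F k = 0" unfolding transf_def by (metis sum.empty)
    qed
    moreover have "(\<Sum>k<m. ?F k) = 1"
    proof -
      have "(\<Sum>k<m. ?F k) = sum F {k. k < m \<and> tmap C k \<in> {..<m}}" by (rule transf_sum) simp
      also have "{k. k < m \<and> tmap C k \<in> {..<m}} = {..<m}" using tl by (auto intro: le_less_trans)
      finally show ?thesis using F by (simp add: distrs_def)
    qed
    ultimately show ?thesis by (simp add: distrs_def)
  qed
  moreover have "\<And>k. k < m \<Longrightarrow> k \<notin> augment m C \<Longrightarrow> ?F k = 0"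
  proof -
    fix k assume "k < m" "k \<notin> augment m C"
    then have "{j. j < m \<and> tmap C j = k} = {}" using tmap_aug[OF C] by blast
    then show "?F k = 0" unfolding transf_def by (metis sum.empty)
  qed
  ultimately show "?F \<in> distrs_on m (augment m C)" by (simp add: distrs_on_def)
  show "agree_cumulative C F ?F" unfolding agree_cumulative_def
  proof
    fix c assume c: "c \<in> C"
    have cm: "c < m" using c C by auto
    have "sum ?F {..c} = sum F {k. k < m \<and> tmap C k \<in> {..c}}" by (rule transf_sum) simp
    also have "{k. k < m \<and> tmap C k \<in> {..c}} = {..c}" using tmap_cum[OF f c] cm by auto
    finally show "sum F {..c} = sum ?F {..c}" by simp
  qed
  show "agree_pointwise C F ?F" unfolding agree_pointwise_def
  proof
    fix c assume c: "c \<in> C"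
    have cm: "c < m" using c C by auto
    have "{k. k < m \<and> tmap C k = c} = {c}"
    proof -
      have eqc: "k = c" if "tmap C k = c" for k
      proof (cases "k \<in> C")
        case True then show ?thesis using that by (simp add: tmap_def)
      next
        case False then show ?thesis using tmap_notin[OF f False] that c by simp
      qed
      have tc: "tmap C c = c" using c by (simp add: tmap_def)
      show ?thesis
      proof
        show "{k. k < m \<and> tmap C k = c} \<subseteq> {c}" using eqc by blast
        show "{c} \<subseteq> {k. k < m \<and> tmap C k = c}" using tc cm by blast
      qed
    qed
    then show "F c = ?F c" unfolding transf_def by simp
  qed
  have inner: "?F i * Sval Smin Smax m i = (\<Sum>k\<in>{x. x \<in> {..<m} \<and> tmap C x = i}. F k * Sval Smin Smax m (tmap C k))" for i
  proof -
    have "?F i * Sval Smin Smax m i = (\<Sum>k\<in>{x. x \<in> {..<m} \<and> tmap C x = i}. F k * Sval Smin Smax m i)"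
      unfolding transf_def sum_distrib_right by simp
    also have "\<dots> = (\<Sum>k\<in>{x. x \<in> {..<m} \<and> tmap C x = i}. F k * Sval Smin Smax m (tmap C k))"
      by (rule sum.cong) auto
    finally show ?thesis .
  qed
  have "mean Smin Smax m ?F = (\<Sum>i<m. \<Sum>k\<in>{x. x \<in> {..<m} \<and> tmap C x = i}. F k * Sval Smin Smax m (tmap C k))"
    unfolding mean_def using inner by simp
  also have "\<dots> = (\<Sum>k<m. F k * Sval Smin Smax m (tmap C k))"
  proof (rule sum.group)
    show "tmap C ` {..<m} \<subseteq> {..<m}" using tl by (auto intro: le_less_trans)
  qed auto
  also have "\<dots> \<le> (\<Sum>k<m. F k * Sval Smin Smax m k)"
    by (intro sum_mono mult_left_mono Sval_mono[OF m S] tl nn)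
  finally show "mean Smin Smax m ?F \<le> mean Smin Smax m F" by (simp add: mean_def)
qed

definition Kset :: "nat \<Rightarrow> (nat \<Rightarrow> real) set" where
  "Kset m = Pi UNIV (\<lambda>k. if k < m then {0..1} else {0})"

lemma Kset_compact: "compact (Kset m)"
proof -
  have "compactin (product_topology (\<lambda>_. euclidean) UNIV) (PiE UNIV (\<lambda>k::nat. if k < m then {0..1::real} else {0}))"
    by (subst compactin_PiE) auto
  then show ?thesis unfolding Kset_def PiE_UNIV_domain euclidean_product_topology by simp
qed

lemma distrs_Kset: "distrs m \<subseteq> Kset m"
proof
  fix F assume F: "F \<in> distrs m"
  have "\<And>k. k < m \<Longrightarrow> F k \<le> 1"
  proof -
    fix k assume k: "k < m"
    have "F k \<le> sum F {..<m}" using F k by (intro member_le_sum) (auto simp: distrs_def)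
    then show "F k \<le> 1" using F by (simp add: distrs_def)
  qed
  then show "F \<in> Kset m" using F unfolding Kset_def distrs_def by auto
qed

lemma mean_cont: "continuous_on UNIV (mean Smin Smax m)"
  unfolding mean_def by (intro continuous_intros continuous_on_product_coordinates)

theorem lemma9:
  fixes m n :: nat and Smin Smax \<alpha> :: real
    and R :: "(nat multiset \<times> nat multiset) set" and x :: "nat multiset" and C :: "nat set"
  assumes "m \<ge> 2" and "n \<ge> 1" and "Smin < Smax"
    and "x \<in> samples m n"
    and "0 \<le> \<alpha>" and "\<alpha> < 1"
    and "total_preorder_on_samples (samples m n) R"
    and "Fset m n (upset (samples m n) R x) \<alpha> \<noteq> {}"
    and "C \<subseteq> {..<m}"
    and "\<forall>G \<in> distrs m. \<forall>H \<in> distrs m.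
           agree_cumulative C G H \<and> agree_pointwise C G H \<longrightarrow>
           prob_samp m n G (upset (samples m n) R x) = prob_samp m n H (upset (samples m n) R x)"
  shows "is_min (mean Smin Smax m ` Fset_on m n (augment m C) (upset (samples m n) R x) \<alpha>)
                (Bstar Smin Smax m n \<alpha> R x)"
proof -
  define Om where "Om = upset (samples m n) R x"
  define G where "G = Gset m n Om \<alpha>"
  define Gon where "Gon = Gset_on m n (augment m C) Om \<alpha>"
  define mu where "mu = mean Smin Smax m"
  have mc: "continuous_on UNIV mu" unfolding mu_def by (rule mean_cont)
  have GF: "Fset m n Om \<alpha> = closure G" unfolding G_def Fset_def by simp
  have GonF: "Fset_on m n (augment m C) Om \<alpha> = closure Gon" unfolding Gon_def Fset_on_def by simp
  have B: "Bstar Smin Smax m n \<alpha> R x = Inf (mu ` closure G)"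
    unfolding Bstar_def mu_def GF[symmetric] Om_def by simp
  have Gne: "G \<noteq> {}" using assms(8) GF Om_def by auto
  have key: "\<And>F. F \<in> G \<Longrightarrow> \<exists>F'\<in>Gon. mu F' \<le> mu F"
  proof -
    fix F assume F: "F \<in> G"
    have Fd: "F \<in> distrs m" using F by (simp add: G_def Gset_def)
    note tr = transform[OF assms(1) assms(3) assms(9) Fd]
    have Fd': "transf m C F \<in> distrs m" using tr(1) by (simp add: distrs_on_def)
    have "prob_samp m n F Om = prob_samp m n (transf m C F) Om"
      using assms(10) Fd Fd' tr(2,3) unfolding Om_def by blast
    then have "transf m C F \<in> Gon" using F tr(1) Fd'
      by (simp add: Gon_def Gset_on_def G_def Gset_def)
    then show "\<exists>F'\<in>Gon. mu F' \<le> mu F" using tr(4) unfolding mu_def by blast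
  qed
  have Gon_ne: "Gon \<noteq> {}" using Gne key by blast
  have GonG: "Gon \<subseteq> G" by (auto simp: Gon_def Gset_on_def G_def)
  have clG: "closure G \<subseteq> Kset m"
    by (rule closure_minimal) (use distrs_Kset Kset_compact compact_imp_closed in \<open>auto simp: G_def Gset_def\<close>)
  have cpt: "compact (closure Gon)"
  proof -
    have "closure Gon \<subseteq> Kset m" using closure_mono[OF GonG] clG by auto
    then have "closure Gon = Kset m \<inter> closure Gon" by auto
    then show ?thesis using Kset_compact by (metis closed_closure compact_Int_closed)
  qed
  have cne: "closure Gon \<noteq> {}" using Gon_ne by simp
  have mcG: "continuous_on (closure Gon) mu" using mc continuous_on_subset subset_UNIV by blast
  obtain Fs where Fs: "Fs \<in> closure Gon" "\<And>y. y \<in> closure Gon \<Longrightarrow> mu Fs \<le> mu y"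
    using continuous_attains_inf[OF cpt cne mcG] by blast
  have lb: "closure G \<subseteq> {F. mu Fs \<le> mu F}"
  proof (rule closure_minimal)
    show "G \<subseteq> {F. mu Fs \<le> mu F}"
    proof
      fix F assume "F \<in> G"
      then obtain F' where F': "F' \<in> Gon" "mu F' \<le> mu F" using key by blast
      have "F' \<in> closure Gon" using F'(1) closure_subset by blast
      then have "mu Fs \<le> mu F'" by (rule Fs(2))
      then show "F \<in> {F. mu Fs \<le> mu F}" using F'(2) by simp
    qed
    show "closed {F. mu Fs \<le> mu F}" by (rule closed_Collect_le) (simp, rule mc)
  qed
  have bdd: "bdd_below (mu ` closure G)"
  proof -
    have mcK: "continuous_on (Kset m) mu" using mc continuous_on_subset subset_UNIV by blast
    have "compact (mu ` Kset m)" by (rule compact_continuous_image[OF mcK Kset_compact])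
    then have "bdd_below (mu ` Kset m)" by (intro bounded_imp_bdd_below compact_imp_bounded)
    moreover have "mu ` closure G \<subseteq> mu ` Kset m" using clG by (rule image_mono)
    ultimately show ?thesis by (rule bdd_below_mono)
  qed
  have FsG: "Fs \<in> closure G" using Fs(1) closure_mono[OF GonG] by auto
  have eq: "Inf (mu ` closure G) = mu Fs"
  proof (rule antisym)
    show "Inf (mu ` closure G) \<le> mu Fs" using FsG bdd by (intro cInf_lower) auto
    show "mu Fs \<le> Inf (mu ` closure G)" using lb Gne by (intro cInf_greatest) auto
  qed
  show ?thesis unfolding is_min_def B eq GonF[unfolded Om_def] 
    using Fs unfolding mu_def Gon_def Om_def by auto
qed

end
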